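(* Let $\Delta t>0$, let $L\in\mathbb{R}^{3\times 3}$ be symmetric positive definite, let $\mathcal{Z}\subset\mathfrak{so}(3)$ be a finite set, let $\Psi:\mathfrak{so}(3)\times\mathfrak{so}(3)\to SO(3)$ be a given map, and let $A_{k+1}\in\mathfrak{so}(3)$ and $Y_{k+1}\in SO(3)$ be given. Suppose $V_k:SO(3)\to\mathbb{R}$ has the min-plus affine form $$V_k(R)=\min_{\lambda\in\Lambda_k}\Big[c_\lambda-\tfrac12\,\mathrm{tr}(M_\lambda R)\Big],$$ where $\Lambda_k$ is a finite index set, $c_\lambda\in\mathbb{R}$ and $M_\lambda\in\mathbb{R}^{3\times3}$. Define $V_{k+1}:SO(3)\to\mathbb{R}$ by the one-step dynamic programming recursion $$V_{k+1}(R)=\min_{z\in\mathcal{Z}}\Big\{\tfrac12\,\mathrm{tr}(z^Tz)\,\Delta t+\tfrac14\,\phi_{L^{-1}}(R^{-1}Y_{k+1})\,\Delta t+V_k\big(R\,\Psi(A_{k+1},z)\big)\Big\},$$ where $\phi_M(Q):=\mathrm{tr}\big[(Q-I)^TM(Q-I)\big]$. Then $V_{k+1}$ has the same min-plus affine form: $$V_{k+1}(R)=\min_{(\lambda,z)\in\Lambda_k\times\mathcal{Z}}\Big[c_{(\lambda,z)}-\tfrac12\,\mathrm{tr}\big(M_{(\lambda,z)}R\big)\Big]\quad\text{for all }R\in SO(3),$$ with $$c_{(\lambda,z)}=c_\lambda+\tfrac12\,\mathrm{tr}(z^Tz)\,\Delta t+\tfrac12\,\mathrm{tr}(L^{-1})\,\Delta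 t,\qquad M_{(\lambda,z)}=(L^{-1})^TY_{k+1}^T\,\Delta t+\Psi(A_{k+1},z)\,M_\lambda .$$
   Context: $SO(3)$ is the group of $3\times3$ real orthogonal matrices with determinant $1$ and $\mathfrak{so}(3)$ the space of $3\times3$ real skew-symmetric matrices. This result concerns deterministic (minimum-energy) attitude filtering for the system $\dot R=R(A+z)$, $Y=R\epsilon$ with $\epsilon\in SO(3)$, where the value function is propagated backward in time by dynamic programming over a finite discretized disturbance set $\mathcal{Z}$, and $\Psi(A,z)$ denotes the (discretized) backward state-transition factor, so that the previous state is $R\,\Psi(A_{k+1},z)$. The min-plus notation $\bigoplus$/$\otimes$ stands for $\min$/$+$. *)

theory Defs
  imports "HOL-Analysis.Analysis"
begin

type_synonym mat3 = "real^3^3"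

definition SO3 :: "mat3 set" where
  "SO3 = {R. transpose R ** R = mat 1 \<and> det R = 1}"

definition so3 :: "mat3 set" where
  "so3 = {z. transpose z = - z}"

definition phi :: "mat3 \<Rightarrow> mat3 \<Rightarrow> real" where
  "phi M Q = trace (transpose (Q - mat 1) ** M ** (Q - mat 1))"

definition sym_pos_def :: "mat3 \<Rightarrow> bool" where
  "sym_pos_def L \<longleftrightarrow> transpose L = L \<and> (\<forall>x::real^3. x \<noteq> 0 \<longrightarrow> x \<bullet> (L *v x) > 0)"

end

theory Submission
  imports Defs
begin

lemma min_pair:
  fixes a :: "'z \<Rightarrow> real" and b :: "'l \<Rightarrow> 'z \<Rightarrow> real"
  assumes "finite Lam" "Lam \<noteq> {}" "finite Z" "Z \<noteq> {}"
  shows "Min ((\<lambda>z. a z + Min ((\<lambda>l. b l z) ` Lam)) ` Z) = Min ((\<lambda>(l,z). a z + b l z) ` (Lam \<times> Z))"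
proof (rule antisym)
  show "Min ((\<lambda>z. a z + Min ((\<lambda>l. b l z) ` Lam)) ` Z) \<le> Min ((\<lambda>(l,z). a z + b l z) ` (Lam \<times> Z))"
  proof (rule Min.boundedI)
    show "finite ((\<lambda>(l,z). a z + b l z) ` (Lam \<times> Z))" using assms by simp
    show "(\<lambda>(l,z). a z + b l z) ` (Lam \<times> Z) \<noteq> {}" using assms by simp
    fix x assume "x \<in> (\<lambda>(l,z). a z + b l z) ` (Lam \<times> Z)"
    then obtain l z where lz: "l \<in> Lam" "z \<in> Z" "x = a z + b l z" by auto
    have "Min ((\<lambda>z. a z + Min ((\<lambda>l. b l z) ` Lam)) ` Z) \<le> a z + Min ((\<lambda>l. b l z) ` Lam)"
      using assms lz by (intro Min_le) auto
    also have "Min ((\<lambda>l. b l z) ` Lam) \<le> b l z" using assms lz by (intro Min_le) auto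
    finally show "Min ((\<lambda>z. a z + Min ((\<lambda>l. b l z) ` Lam)) ` Z) \<le> x" using lz by simp
  qed
next
  show "Min ((\<lambda>(l,z). a z + b l z) ` (Lam \<times> Z)) \<le> Min ((\<lambda>z. a z + Min ((\<lambda>l. b l z) ` Lam)) ` Z)"
  proof (rule Min.boundedI)
    show "finite ((\<lambda>z. a z + Min ((\<lambda>l. b l z) ` Lam)) ` Z)" using assms by simp
    show "(\<lambda>z. a z + Min ((\<lambda>l. b l z) ` Lam)) ` Z \<noteq> {}" using assms by simp
    fix x assume "x \<in> (\<lambda>z. a z + Min ((\<lambda>l. b l z) ` Lam)) ` Z"
    then obtain z where z: "z \<in> Z" "x = a z + Min ((\<lambda>l. b l z) ` Lam)" by auto
    have "Min ((\<lambda>l. b l z) ` Lam) \<in> (\<lambda>l. b l z) ` Lam" using assms by (intro Min_in) auto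
    then obtain l where l: "l \<in> Lam" "Min ((\<lambda>l. b l z) ` Lam) = b l z" by auto
    show "Min ((\<lambda>(l,z). a z + b l z) ` (Lam \<times> Z)) \<le> x"
      using assms z l by (intro Min_le) (auto intro!: image_eqI[of _ _ "(l,z)"])
  qed
qed

lemma mm_diff_l: "(A::real^'n^'m) ** (B - C) = A ** B - A ** C"
  by (simp add: matrix_matrix_mult_def vec_eq_iff sum_subtractf right_diff_distrib)
lemma mm_diff_r: "((A::real^'n^'m) - B) ** C = A ** C - B ** C"
  by (simp add: matrix_matrix_mult_def vec_eq_iff sum_subtractf left_diff_distrib)
lemma mm_add_r: "((A::real^'n^'m) + B) ** C = A ** C + B ** C"
  by (simp add: matrix_matrix_mult_def vec_eq_iff sum.distrib distrib_right)
lemma tr_diff: "transpose ((A::real^'n^'m) - B) = transpose A - transpose B"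
  by (simp add: transpose_def vec_eq_iff)
lemma trace_transpose': "trace (transpose (A::real^'n^'n)) = trace A"
  by (simp add: trace_def transpose_def)
lemma trace_scaleR: "trace (k *\<^sub>R (A::real^'n^'n)) = k * trace A"
  by (simp add: trace_def sum_distrib_left)
lemma inv_unique: assumes "(X::real^'n^'n) ** A = mat 1" "A ** X = mat 1"
  shows "matrix_inv A = X"
proof -
  have h: "A ** matrix_inv A = mat 1 \<and> matrix_inv A ** A = mat 1"
    unfolding matrix_inv_def by (rule someI[of _ X]) (use assms in auto)
  have "X = X ** (A ** matrix_inv A)" using h by simp
  also have "\<dots> = (X ** A) ** matrix_inv A" by (simp add: matrix_mul_assoc)
  finally show ?thesis using assms by simp
qed

lemma SO3_mult: assumes "R \<in> SO3" "P \<in> SO3" shows "R ** P \<in> SO3"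
proof -
  have "transpose (R ** P) ** (R ** P) = transpose P ** (transpose R ** R) ** P"
    by (simp add: matrix_transpose_mul matrix_mul_assoc)
  also have "\<dots> = mat 1" using assms by (simp add: SO3_def)
  finally show ?thesis using assms by (simp add: SO3_def det_mul)
qed

lemma phi_eq:
  fixes N Q :: mat3
  assumes N: "transpose N = N" and Q: "Q ** transpose Q = mat 1"
  shows "phi N Q = 2 * trace N - 2 * trace (N ** Q)"
proof -
  have e: "transpose (Q - mat 1) ** N ** (Q - mat 1)
      = transpose Q ** N ** Q - transpose Q ** N - N ** Q + N"
    by (simp add: tr_diff mm_diff_l mm_diff_r matrix_mul_assoc)
  have t1: "trace (transpose Q ** N ** Q) = trace N"
    by (metis Q matrix_mul_assoc matrix_mul_lid trace_mul_sym)
  have t2: "trace (transpose Q ** N) = trace (N ** Q)"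
    by (metis N matrix_transpose_mul trace_transpose')
  show ?thesis unfolding phi_def e using t1 t2 by (simp add: trace_add trace_sub)
qed

theorem mainTheorem1:
  fixes dt :: real and L :: mat3 and Z :: "mat3 set"
    and Psi :: "mat3 \<Rightarrow> mat3 \<Rightarrow> mat3" and A Y :: mat3
    and Lam :: "'l set" and c :: "'l \<Rightarrow> real" and M :: "'l \<Rightarrow> mat3"
    and Vk Vk1 :: "mat3 \<Rightarrow> real"
  assumes dt: "dt > 0"
    and L: "sym_pos_def L"
    and Zfin: "finite Z" and Zne: "Z \<noteq> {}" and Zsub: "Z \<subseteq> so3"
    and Psi: "\<And>a z. a \<in> so3 \<Longrightarrow> z \<in> so3 \<Longrightarrow> Psi a z \<in> SO3"
    and A: "A \<in> so3" and Y: "Y \<in> SO3"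
    and Lfin: "finite Lam" and Lne: "Lam \<noteq> {}"
    and Vk: "\<And>R. R \<in> SO3 \<Longrightarrow>
               Vk R = Min ((\<lambda>l. c l - 1/2 * trace (M l ** R)) ` Lam)"
    and Vk1: "\<And>R. R \<in> SO3 \<Longrightarrow>
               Vk1 R = Min ((\<lambda>z. 1/2 * trace (transpose z ** z) * dt
                               + 1/4 * phi (matrix_inv L) (matrix_inv R ** Y) * dt
                               + Vk (R ** Psi A z)) ` Z)"
  shows "\<forall>R \<in> SO3. Vk1 R =
           Min ((\<lambda>(l, z). (c l + 1/2 * trace (transpose z ** z) * dt
                                + 1/2 * trace (matrix_inv L) * dt)
                 - 1/2 * trace ((dt *\<^sub>R (transpose (matrix_inv L) ** transpose Y)
                                 + Psi A z ** M l) ** R)) ` (Lam \<times> Z))"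
  proof
  fix R assume R: "R \<in> SO3"
  have RtR: "transpose R ** R = mat 1" using R by (simp add: SO3_def)
  hence RRt: "R ** transpose R = mat 1" using matrix_left_right_inverse by blast
  have iR: "matrix_inv R = transpose R" by (rule inv_unique[OF RtR RRt])
  have YtY: "transpose Y ** Y = mat 1" using Y by (simp add: SO3_def)
  hence YYt: "Y ** transpose Y = mat 1" using matrix_left_right_inverse by blast
  define N where "N = matrix_inv L"
  have ker: "\<forall>x. L *v x = 0 \<longrightarrow> x = 0"
  proof (intro allI impI)
    fix x assume "L *v x = 0"
    show "x = 0"
    proof (rule ccontr)
      assume "x \<noteq> 0"
      hence "x \<bullet> (L *v x) > 0" using L unfolding sym_pos_def_def by blast
      thus False using \<open>L *v x = 0\<close> by simp
    qed
  qed
  then obtain B where BL: "B ** L = mat 1" using matrix_left_invertible_ker by blast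
  hence LB: "L ** B = mat 1" using matrix_left_right_inverse by blast
  have NB: "N = B" unfolding N_def by (rule inv_unique[OF BL LB])
  have Lt: "transpose L = L" using L by (simp add: sym_pos_def_def)
  have "transpose L ** transpose B = mat 1" using BL by (metis matrix_transpose_mul transpose_mat)
  hence "L ** transpose B = mat 1" using Lt by simp
  hence "transpose B = B" by (metis BL matrix_mul_assoc matrix_mul_lid matrix_mul_rid)
  hence Nt: "transpose N = N" using NB by simp
  define Q where "Q = transpose R ** Y"
  have QQ: "Q ** transpose Q = mat 1"
  proof -
    have "Q ** transpose Q = transpose R ** (Y ** transpose Y) ** R"
      by (simp add: Q_def matrix_transpose_mul matrix_mul_assoc)
    thus ?thesis using YYt RtR by simp
  qed
  have ph: "phi N Q = 2 * trace N - 2 * trace (N ** Q)" by (rule phi_eq[OF Nt QQ])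
  have tNQ: "trace (N ** Q) = trace (transpose N ** transpose Y ** R)"
  proof -
    have "trace (N ** Q) = trace (transpose (N ** Q))" by (simp add: trace_transpose')
    also have "\<dots> = trace (transpose Y ** R ** transpose N)"
      by (simp add: Q_def matrix_transpose_mul matrix_mul_assoc)
    also have "\<dots> = trace (transpose N ** (transpose Y ** R))" by (rule trace_mul_sym)
    finally show ?thesis by (simp add: matrix_mul_assoc)
  qed
  let ?b = "\<lambda>l z. c l - 1/2 * trace (Psi A z ** M l ** R)"
  let ?a = "\<lambda>z. 1/2 * trace (transpose z ** z) * dt + 1/2 * trace N * dt
              - 1/2 * dt * trace (transpose N ** transpose Y ** R)"
  have step: "1/2 * trace (transpose z ** z) * dt
                + 1/4 * phi (matrix_inv L) (matrix_inv R ** Y) * dt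
                + Vk (R ** Psi A z) = ?a z + Min ((\<lambda>l. ?b l z) ` Lam)" if z: "z \<in> Z" for z
  proof -
    have P: "Psi A z \<in> SO3" using Psi A z Zsub by auto
    have "Vk (R ** Psi A z) = Min ((\<lambda>l. c l - 1/2 * trace (M l ** (R ** Psi A z))) ` Lam)"
      using Vk SO3_mult[OF R P] by simp
    also have "(\<lambda>l. c l - 1/2 * trace (M l ** (R ** Psi A z))) = (\<lambda>l. ?b l z)"
    proof
      fix l
      have "trace (M l ** (R ** Psi A z)) = trace (Psi A z ** (M l ** R))"
        by (metis matrix_mul_assoc trace_mul_sym)
      thus "c l - 1/2 * trace (M l ** (R ** Psi A z)) = ?b l z" by (simp add: matrix_mul_assoc)
    qed
    finally have V: "Vk (R ** Psi A z) = Min ((\<lambda>l. ?b l z) ` Lam)" .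
    have pp: "phi (matrix_inv L) (matrix_inv R ** Y) = phi N Q" by (simp add: iR N_def Q_def)
    show ?thesis unfolding V pp ph tNQ by (simp add: algebra_simps)
  qed
  have "Vk1 R = Min ((\<lambda>z. ?a z + Min ((\<lambda>l. ?b l z) ` Lam)) ` Z)"
    unfolding Vk1[OF R] by (rule arg_cong[where f=Min], rule image_cong[OF refl step])
  also have "\<dots> = Min ((\<lambda>(l,z). ?a z + ?b l z) ` (Lam \<times> Z))"
    by (rule min_pair[OF Lfin Lne Zfin Zne])
  also have "(\<lambda>(l,z). ?a z + ?b l z) = (\<lambda>(l, z). (c l + 1/2 * trace (transpose z ** z) * dt
                                + 1/2 * trace (matrix_inv L) * dt)
                 - 1/2 * trace ((dt *\<^sub>R (transpose (matrix_inv L) ** transpose Y)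
                                 + Psi A z ** M l) ** R))"
    by (simp add: fun_eq_iff N_def mm_add_r trace_add trace_scaleR
          flip: scalar_matrix_assoc; simp add: algebra_simps)
  finally show "Vk1 R = Min ((\<lambda>(l, z). (c l + 1/2 * trace (transpose z ** z) * dt
                                + 1/2 * trace (matrix_inv L) * dt)
                 - 1/2 * trace ((dt *\<^sub>R (transpose (matrix_inv L) ** transpose Y)
                                 + Psi A z ** M l) ** R)) ` (Lam \<times> Z))" .
qed

end
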